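(* Let $G$ be a graph with a vertex cover $X\subseteq V(G)$, $I=V(G)\setminus X$, $C\subseteq V(G)$, $\mathcal{B}=\{N_G[w]:w\in C\}$, and $k$ a positive integer. If $u,v\in I$ are distinct false twins with $N_G[u]\notin\mathcal{B}$ and $N_G[v]\notin\mathcal{B}$, then, with $G'=G-v$ and $\mathcal{B}'=\{N_{G'}[w]: w\in C\}$, we have NCTD$(\mathcal{B})\le k$ if and only if NCTD$(\mathcal{B}')\le k$.
   Context: $N_G(v)$ and $N_G[v]$ are the open and closed neighborhoods of $v$ in $G$; $u,v$ are false twins if $N(u)=N(v)$. A teaching map for $\mathcal{B}$ assigns to each $B\in\mathcal{B}$ a set $T(B)\subseteq V(G)$. A vertex $w$ distinguishes $B,B'$ if $w$ lies in exactly one of them. $T$ is non-clashing if for all distinct $B,B'\in\mathcal{B}$ some $w\in T(B)\cup T(B')$ distinguishes them; its size is $\max_{B\in\mathcal{B}}|T(B)|$. NCTD$(\mathcal{B})$ is the minimum size of a non-clashing teaching map for $\mathcal{B}$. *)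

theory Defs
  imports Main
begin

definition simple_graph :: "'a set \<Rightarrow> ('a \<Rightarrow> 'a \<Rightarrow> bool) \<Rightarrow> bool" where
  "simple_graph V E \<longleftrightarrow> finite V \<and> (\<forall>x y. E x y \<longrightarrow> x \<in> V \<and> y \<in> V)
     \<and> (\<forall>x y. E x y \<longrightarrow> E y x) \<and> (\<forall>x. \<not> E x x)"

definition vertex_cover :: "'a set \<Rightarrow> ('a \<Rightarrow> 'a \<Rightarrow> bool) \<Rightarrow> 'a set \<Rightarrow> bool" where
  "vertex_cover V E X \<longleftrightarrow> X \<subseteq> V \<and> (\<forall>x y. E x y \<longrightarrow> x \<in> X \<or> y \<in> X)"

definition open_nbh :: "'a set \<Rightarrow> ('a \<Rightarrow> 'a \<Rightarrow> bool) \<Rightarrow> 'a \<Rightarrow> 'a set" where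
  "open_nbh V E v = {w \<in> V. E v w}"

definition closed_nbh :: "'a set \<Rightarrow> ('a \<Rightarrow> 'a \<Rightarrow> bool) \<Rightarrow> 'a \<Rightarrow> 'a set" where
  "closed_nbh V E v = insert v (open_nbh V E v)"

definition del_vertex_V :: "'a set \<Rightarrow> 'a \<Rightarrow> 'a set" where
  "del_vertex_V V v = V - {v}"

definition del_vertex_E :: "('a \<Rightarrow> 'a \<Rightarrow> bool) \<Rightarrow> 'a \<Rightarrow> ('a \<Rightarrow> 'a \<Rightarrow> bool)" where
  "del_vertex_E E v = (\<lambda>x y. E x y \<and> x \<noteq> v \<and> y \<noteq> v)"

definition distinguishes :: "'a \<Rightarrow> 'a set \<Rightarrow> 'a set \<Rightarrow> bool" where
  "distinguishes w B B' \<longleftrightarrow> (w \<in> B) \<noteq> (w \<in> B')"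

definition teaching_map :: "'a set \<Rightarrow> 'a set set \<Rightarrow> ('a set \<Rightarrow> 'a set) \<Rightarrow> bool" where
  "teaching_map V \<B> T \<longleftrightarrow> (\<forall>B \<in> \<B>. T B \<subseteq> V)"

definition non_clashing :: "'a set set \<Rightarrow> ('a set \<Rightarrow> 'a set) \<Rightarrow> bool" where
  "non_clashing \<B> T \<longleftrightarrow>
     (\<forall>B \<in> \<B>. \<forall>B' \<in> \<B>. B \<noteq> B' \<longrightarrow> (\<exists>w \<in> T B \<union> T B'. distinguishes w B B'))"

text \<open>Size of T = max over B of |T B|; NCTD = least size of a non-clashing teaching map.
  "size \<le> k" is expressed as "card (T B) \<le> k for all B".\<close>
definition NCTD :: "'a set \<Rightarrow> 'a set set \<Rightarrow> nat" where
  "NCTD V \<B> = (LEAST k. \<exists>T. teaching_map V \<B> T \<and> non_clashing \<B> T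
                              \<and> (\<forall>B \<in> \<B>. card (T B) \<le> k))"

end

theory Submission
  imports Defs
begin

lemma NCTD_le_iff:
  assumes "finite V" and "\<forall>B\<in>\<B>. B \<subseteq> V"
  shows "NCTD V \<B> \<le> k \<longleftrightarrow> (\<exists>T. teaching_map V \<B> T \<and> non_clashing \<B> T \<and> (\<forall>B \<in> \<B>. card (T B) \<le> k))"
proof
  let ?P = "\<lambda>k. \<exists>T. teaching_map V \<B> T \<and> non_clashing \<B> T \<and> (\<forall>B \<in> \<B>. card (T B) \<le> k)"
  have ex: "?P (card V)"
    apply (rule exI[of _ "\<lambda>_. V"])
    using assms by (auto simp: teaching_map_def non_clashing_def distinguishes_def)
  assume "NCTD V \<B> \<le> k"
  moreover have "?P (NCTD V \<B>)" unfolding NCTD_def using ex by (rule LeastI)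
  ultimately show "?P k" by (meson le_trans)
next
  assume "\<exists>T. teaching_map V \<B> T \<and> non_clashing \<B> T \<and> (\<forall>B \<in> \<B>. card (T B) \<le> k)"
  then show "NCTD V \<B> \<le> k" unfolding NCTD_def by (rule Least_le)
qed

lemma ncD:
  assumes "non_clashing Bs T" "B \<in> Bs" "B' \<in> Bs" "B \<noteq> B'"
  shows "\<exists>w\<in>T B \<union> T B'. distinguishes w B B'"
  using assms unfolding non_clashing_def by blast

theorem lemma6:
  fixes V :: "'a set" and E :: "'a \<Rightarrow> 'a \<Rightarrow> bool" and X C :: "'a set"
    and u v :: 'a and k :: nat
  assumes "simple_graph V E"
    and "vertex_cover V E X"
    and "C \<subseteq> V"
    and "k > 0"
    and "u \<in> V - X" and "v \<in> V - X" and "u \<noteq> v"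
    and "open_nbh V E u = open_nbh V E v"
    and "closed_nbh V E u \<notin> (closed_nbh V E) ` C"
    and "closed_nbh V E v \<notin> (closed_nbh V E) ` C"
  shows "NCTD V ((closed_nbh V E) ` C) \<le> k \<longleftrightarrow>
         NCTD (del_vertex_V V v)
              ((closed_nbh (del_vertex_V V v) (del_vertex_E E v)) ` C) \<le> k"
proof -
  let ?B = "(closed_nbh V E) ` C"
  let ?B' = "(closed_nbh (del_vertex_V V v) (del_vertex_E E v)) ` C"
  have g: "finite V" "\<And>x y. E x y \<Longrightarrow> x \<in> V \<and> y \<in> V" "\<And>x y. E x y \<Longrightarrow> E y x" "\<And>x. \<not> E x x"
    using assms(1) unfolding simple_graph_def by blast+
  have uC: "u \<notin> C" using assms(9) by blast
  have vC: "v \<notin> C" using assms(10) by blast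
  have uv: "v \<in> closed_nbh V E w \<longleftrightarrow> u \<in> closed_nbh V E w" if "w \<in> C" for w
  proof -
    have "w \<noteq> u" "w \<noteq> v" "w \<in> V" using uC vC that assms(3) by auto
    moreover have "E u w \<longleftrightarrow> E v w" using assms(8) \<open>w \<in> V\<close> unfolding open_nbh_def by blast
    moreover have "E w v \<longleftrightarrow> E v w" "E w u \<longleftrightarrow> E u w" using g(3) by blast+
    ultimately show ?thesis using assms(5,6) unfolding closed_nbh_def open_nbh_def by auto
  qed
  have sub: "\<forall>B\<in>?B. B \<subseteq> V" using assms(3) unfolding closed_nbh_def open_nbh_def by auto
  have sub': "\<forall>B\<in>?B'. B \<subseteq> del_vertex_V V v"
    using assms(3) vC unfolding closed_nbh_def open_nbh_def del_vertex_V_def by auto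
  have nb': "closed_nbh (del_vertex_V V v) (del_vertex_E E v) w = closed_nbh V E w - {v}" if "w \<in> C" for w
    using that vC unfolding closed_nbh_def open_nbh_def del_vertex_V_def del_vertex_E_def by auto
  have B'eq: "?B' = (\<lambda>B. B - {v}) ` ?B" using nb' by (auto simp: image_image)
  define \<psi> where "\<psi> S = (if u \<in> S then insert v S else S)" for S
  have psi: "\<psi> (B - {v}) = B" if "B \<in> ?B" for B
    using that uv assms(7) unfolding \<psi>_def by auto
  have inj: "B1 - {v} \<noteq> B2 - {v}" if "B1 \<in> ?B" "B2 \<in> ?B" "B1 \<noteq> B2" for B1 B2
    using psi that by metis
  have fin': "finite (del_vertex_V V v)" using g(1) unfolding del_vertex_V_def by auto
  show ?thesis
    unfolding NCTD_le_iff[OF g(1) sub] NCTD_le_iff[OF fin' sub']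
  proof
    assume "\<exists>T. teaching_map V ?B T \<and> non_clashing ?B T \<and> (\<forall>B\<in>?B. card (T B) \<le> k)"
    then obtain T where T: "teaching_map V ?B T" "non_clashing ?B T" "\<forall>B\<in>?B. card (T B) \<le> k" by blast
    define sw where "sw S = (if v \<in> S then insert u (S - {v}) else S)" for S
    define T' where "T' S = sw (T (\<psi> S))" for S
    have T'B: "T' (B - {v}) = sw (T B)" if "B \<in> ?B" for B using psi that unfolding T'_def by simp
    have finT: "finite (T B)" if "B \<in> ?B" for B
      using T(1) that g(1) unfolding teaching_map_def by (meson finite_subset)
    have cardsw: "card (sw S) \<le> card S" if "finite S" for S
    proof (cases "v \<in> S")
      case True
      have c1: "card (insert u (S - {v})) \<le> Suc (card (S - {v}))" using that by (simp add: card_insert_if)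
      have c2: "card (S - {v}) = card S - 1" using True that by simp
      have c3: "card S > 0" using True that card_gt_0_iff by blast
      have "card (insert u (S - {v})) \<le> card S" using c1 c2 c3 by linarith
      then show ?thesis using True unfolding sw_def by simp
    qed (simp add: sw_def)
    have sw1: "u \<in> sw S" if "v \<in> S" for S using that unfolding sw_def by simp
    have sw2: "w \<in> sw S" if "w \<in> S" "w \<noteq> v" for S w using that unfolding sw_def by simp
    have sw3: "sw S \<subseteq> del_vertex_V V v" if "S \<subseteq> V" for S
      using that assms(5,7) unfolding sw_def del_vertex_V_def by auto
    have uvB: "v \<in> B \<longleftrightarrow> u \<in> B" if "B \<in> ?B" for B using uv that by blast
    show "\<exists>T. teaching_map (del_vertex_V V v) ?B' T \<and> non_clashing ?B' T \<and> (\<forall>B\<in>?B'. card (T B) \<le> k)"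
    proof (intro exI conjI)
      show "teaching_map (del_vertex_V V v) ?B' T'"
        unfolding teaching_map_def B'eq
      proof
        fix B' assume "B' \<in> (\<lambda>B. B - {v}) ` ?B"
        then obtain B where B: "B \<in> ?B" "B' = B - {v}" by blast
        have "T B \<subseteq> V" using T(1) B(1) unfolding teaching_map_def by blast
        then show "T' B' \<subseteq> del_vertex_V V v"
          using sw3 T'B[OF B(1)] B(2) by simp
      qed
      show "\<forall>B\<in>?B'. card (T' B) \<le> k"
        unfolding B'eq
      proof
        fix B' assume "B' \<in> (\<lambda>B. B - {v}) ` ?B"
        then obtain B where B: "B \<in> ?B" "B' = B - {v}" by blast
        have "card (T' B') = card (sw (T B))" using T'B[OF B(1)] B(2) by simp
        also have "\<dots> \<le> card (T B)" using cardsw finT B(1) by blast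
        also have "\<dots> \<le> k" using T(3) B(1) by blast
        finally show "card (T' B') \<le> k" .
      qed
      show "non_clashing ?B' T'"
        unfolding non_clashing_def B'eq
      proof (intro ballI impI)
        fix B1' B2' assume "B1' \<in> (\<lambda>B. B - {v}) ` ?B" "B2' \<in> (\<lambda>B. B - {v}) ` ?B" and ne: "B1' \<noteq> B2'"
        then obtain B1 B2 where B: "B1 \<in> ?B" "B1' = B1 - {v}" "B2 \<in> ?B" "B2' = B2 - {v}" by blast
        then have "B1 \<noteq> B2" using ne by blast
        then obtain w where w: "w \<in> T B1 \<union> T B2" "distinguishes w B1 B2"
          using T(2) B unfolding non_clashing_def by blast
        have e1: "T' B1' = sw (T B1)" using T'B[OF B(1)] B(2) by simp
        have e2: "T' B2' = sw (T B2)" using T'B[OF B(3)] B(4) by simp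
        show "\<exists>w\<in>T' B1' \<union> T' B2'. distinguishes w B1' B2'"
        proof (cases "w = v")
          case True
          then have "u \<in> T' B1' \<union> T' B2'" using w(1) e1 e2 sw1 by blast
          moreover have "distinguishes u B1' B2'"
            using w(2) True uvB[OF B(1)] uvB[OF B(3)] B(2,4) assms(7) unfolding distinguishes_def by blast
          ultimately show ?thesis by blast
        next
          case False
          then have "w \<in> T' B1' \<union> T' B2'" using w(1) e1 e2 sw2 by blast
          moreover have "distinguishes w B1' B2'"
            using w(2) False B(2,4) unfolding distinguishes_def by blast
          ultimately show ?thesis by blast
        qed
      qed
    qed
  next
    assume "\<exists>T. teaching_map (del_vertex_V V v) ?B' T \<and> non_clashing ?B' T \<and> (\<forall>B\<in>?B'. card (T B) \<le> k)"
    then obtain T' where T: "teaching_map (del_vertex_V V v) ?B' T'" "non_clashing ?B' T'" "\<forall>B\<in>?B'. card (T' B) \<le> k" by blast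
    define T where "T B = T' (B - {v})" for B
    show "\<exists>T. teaching_map V ?B T \<and> non_clashing ?B T \<and> (\<forall>B\<in>?B. card (T B) \<le> k)"
    proof (intro exI conjI)
      show "teaching_map V ?B T"
        unfolding teaching_map_def T_def
      proof
        fix B assume "B \<in> ?B"
        then have "B - {v} \<in> ?B'" unfolding B'eq by blast
        then show "T' (B - {v}) \<subseteq> V" using T(1) unfolding teaching_map_def del_vertex_V_def by blast
      qed
      show "\<forall>B\<in>?B. card (T B) \<le> k"
        unfolding T_def
      proof
        fix B assume "B \<in> ?B"
        then have "B - {v} \<in> ?B'" unfolding B'eq by blast
        then show "card (T' (B - {v})) \<le> k" using T(3) by blast
      qed
      show "non_clashing ?B T"
        unfolding non_clashing_def
      proof (intro ballI impI)
        fix B1 B2 assume B: "B1 \<in> ?B" "B2 \<in> ?B" "B1 \<noteq> B2"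
        have "B1 - {v} \<noteq> B2 - {v}" by (rule inj[OF B])
        moreover have "B1 - {v} \<in> ?B'" "B2 - {v} \<in> ?B'" using B(1,2) unfolding B'eq by blast+
        ultimately have "\<exists>w\<in>T' (B1 - {v}) \<union> T' (B2 - {v}). distinguishes w (B1 - {v}) (B2 - {v})"
          using ncD[OF T(2)] by blast
        then obtain w where w: "w \<in> T B1 \<union> T B2" "distinguishes w (B1 - {v}) (B2 - {v})"
          unfolding T_def by blast
        then have "distinguishes w B1 B2" unfolding distinguishes_def by auto
        then show "\<exists>w\<in>T B1 \<union> T B2. distinguishes w B1 B2" using w(1) by blast
      qed
    qed
  qed
qed

end
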